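(* There is an absolute constant $\delta>0$ such that for all integers $1\le k\le n$ and all vectors $u_1,\ldots,u_n\in\mathbb{R}^k$ with $|u_i|\le 1$ for every $i$, $$\Big|\{x\in\mathbb{R}^k:\ |\langle x,u_i\rangle|\le 1\text{ for every } i\}\Big|^{1/k}\ \ge\ \frac{\delta}{\sqrt{1+\log\frac nk}}.$$
   Context: $|u|$ denotes the Euclidean norm, $\langle\cdot,\cdot\rangle$ the standard inner product, $\log$ the natural logarithm, and $|K|$ the $k$-dimensional Lebesgue measure of $K\subset\mathbb{R}^k$. *)

theory Defs
  imports "HOL-Probability.Probability"
begin

text \<open>Vectors in R^k are represented as functions nat => real restricted to {..<k}
  (extensional, i.e. elements of PiE {..<k} (\<lambda>_. UNIV)); Lebesgue measure on R^k is
  the product measure PiM {..<k} (\<lambda>_. lborel).\<close>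

definition inner_k :: "nat \<Rightarrow> (nat \<Rightarrow> real) \<Rightarrow> (nat \<Rightarrow> real) \<Rightarrow> real" where
  "inner_k k x y = (\<Sum>j<k. x j * y j)"

definition norm_k :: "nat \<Rightarrow> (nat \<Rightarrow> real) \<Rightarrow> real" where
  "norm_k k x = sqrt (\<Sum>j<k. (x j)\<^sup>2)"

definition lebesgue_k :: "nat \<Rightarrow> (nat \<Rightarrow> real) measure" where
  "lebesgue_k k = PiM {..<k} (\<lambda>_. lborel)"

end

theory Submission
  imports Defs
begin



lemma cube_measure:
  assumes "finite I" "h \<ge> 0"
  shows "emeasure (PiM I (\<lambda>_. lborel)) (PiE I (\<lambda>j. {c j..<c j + h})) = ennreal (h ^ card I)"
proof -
  interpret product_sigma_finite "\<lambda>_::'a. lborel :: real measure"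
    by (simp add: product_sigma_finite_def lborel.sigma_finite_measure_axioms)
  have "emeasure (PiM I (\<lambda>_. lborel)) (PiE I (\<lambda>j. {c j..<c j + h})) = (\<Prod>j\<in>I. emeasure lborel {c j..<c j + h})"
    using assms by (intro emeasure_PiM) auto
  also have "\<dots> = (\<Prod>j\<in>I. ennreal h)" using assms by simp
  also have "\<dots> = ennreal (h ^ card I)" using assms by (simp add: ennreal_power)
  finally show ?thesis .
qed

lemma hoeff_cosh:
  fixes x :: real
  shows "exp x + exp (-x) \<le> 2 * exp (x^2/2)"
proof -
  have key: "exp y + exp (-y) \<le> 2 * exp (y^2/2)" if "y \<ge> 0" for y :: real
  proof -
    have "-(2*y) * (1/2) + ln (1 + (1/2) * (exp (2*y) - 1)) \<le> (2*y)^2/8"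
      using Hoeffdings_lemma_aux[of "2*y" "1/2"] that by simp
    hence "ln ((1 + exp (2*y))/2) \<le> y + y^2/2"
      by (simp add: power2_eq_square field_simps)
    hence "(1 + exp (2*y))/2 \<le> exp (y + y^2/2)"
      by (smt (verit) exp_gt_zero ln_le_cancel_iff ln_exp)
    hence "(1 + exp (2*y)) * exp (-y) \<le> 2 * exp (y + y^2/2) * exp(-y)"
      by simp
    moreover have "exp (y + y^2/2) * exp(-y) = exp(y^2/2)" by (simp flip: exp_add)
    ultimately show ?thesis by (simp add: distrib_right mult.assoc flip: exp_add)
  qed
  show ?thesis
  proof (cases "x \<ge> 0")
    case True then show ?thesis using key by blast
  next
    case False then show ?thesis using key[of "-x"] by simp
  qed
qed



lemma sym_sum_1d:
  fixes d :: real and Mi :: int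
  shows "(\<Sum>z\<in>{-Mi..Mi}. exp (d * of_int z)) \<le> real (card {-Mi..Mi}) * exp (d^2 * (of_int Mi)^2 / 2)"
proof -
  have re: "(\<Sum>z\<in>{-Mi..Mi}. exp (d * of_int z)) = (\<Sum>z\<in>{-Mi..Mi}. exp (- (d * of_int z)))"
  proof (rule sum.reindex_bij_witness[of _ uminus uminus])
  qed auto
  have "2 * (\<Sum>z\<in>{-Mi..Mi}. exp (d * of_int z)) = (\<Sum>z\<in>{-Mi..Mi}. exp (d * of_int z) + exp (- (d * of_int z)))"
    using re by (simp add: sum.distrib)
  also have "\<dots> \<le> (\<Sum>z\<in>{-Mi..Mi}. 2 * exp (d^2 * (of_int Mi)^2 / 2))"
  proof (rule sum_mono)
    fix z assume z: "z \<in> {-Mi..Mi}"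
    have "(d * of_int z)^2 \<le> d^2 * (of_int Mi)^2"
    proof -
      have "\<bar>of_int z\<bar> \<le> (of_int Mi :: real)" using z by auto
      hence "(of_int z)^2 \<le> (of_int Mi :: real)^2"
        by (metis abs_ge_zero abs_le_square_iff abs_of_nonneg order.trans)
      thus ?thesis by (simp add: power_mult_distrib mult_left_mono)
    qed
    hence "exp ((d * of_int z)^2/2) \<le> exp (d^2 * (of_int Mi)^2 / 2)" by simp
    thus "exp (d * of_int z) + exp (- (d * of_int z)) \<le> 2 * exp (d^2 * (of_int Mi)^2 / 2)"
      using hoeff_cosh[of "d * of_int z"] by linarith
  qed
  also have "\<dots> = 2 * (real (card {-Mi..Mi}) * exp (d^2 * (of_int Mi)^2 / 2))" by simp
  finally show ?thesis by simp
qed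

lemma moment:
  fixes h a c :: real and Mi :: int and I :: "nat set" and v :: "nat \<Rightarrow> real"
  assumes "h \<ge> 0" "h * of_int Mi \<le> a" "0 \<le> Mi" "finite I"
  shows "(\<Sum>m\<in>PiE I (\<lambda>_. {-Mi..Mi}). exp (c * (\<Sum>j\<in>I. h * of_int (m j) * v j)))
     \<le> real (card (PiE I (\<lambda>_. {-Mi..Mi}))) * exp (c^2 * a^2 * (\<Sum>j\<in>I. (v j)^2) / 2)"
proof -
  have "(\<Sum>m\<in>PiE I (\<lambda>_. {-Mi..Mi}). exp (c * (\<Sum>j\<in>I. h * of_int (m j) * v j)))
      = (\<Sum>m\<in>PiE I (\<lambda>_. {-Mi..Mi}). \<Prod>j\<in>I. exp ((c * h * v j) * of_int (m j)))"
    using assms by (intro sum.cong refl) (simp add: exp_sum sum_distrib_left mult_ac)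
  also have "\<dots> = (\<Prod>j\<in>I. \<Sum>z\<in>{-Mi..Mi}. exp ((c * h * v j) * of_int z))"
    using assms by (subst prod_sum_PiE) auto
  also have "\<dots> \<le> (\<Prod>j\<in>I. real (card {-Mi..Mi}) * exp ((c * h * v j)^2 * (of_int Mi)^2 / 2))"
    by (intro prod_mono conjI sum_nonneg sym_sum_1d) auto
  also have "\<dots> \<le> (\<Prod>j\<in>I. real (card {-Mi..Mi}) * exp (c^2 * a^2 * (v j)^2 / 2))"
  proof (intro prod_mono conjI mult_left_mono)
    fix j assume "j \<in> I"
    have h0: "0 \<le> h * of_int Mi" using assms by simp
    have "(h * of_int Mi)^2 \<le> a^2" using assms h0 by (intro power_mono) auto
    hence "(c * h * v j)^2 * (of_int Mi)^2 = (c * v j)^2 * (h * of_int Mi)^2"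
      by (simp add: power_mult_distrib mult_ac)
    moreover have "(c * v j)^2 * (h * of_int Mi)^2 \<le> (c * v j)^2 * a^2"
      using \<open>(h * of_int Mi)^2 \<le> a^2\<close> by (intro mult_left_mono) auto
    ultimately show "exp ((c * h * v j)^2 * (of_int Mi)^2 / 2) \<le> exp (c^2 * a^2 * (v j)^2 / 2)"
      by (simp add: power_mult_distrib mult_ac)
  qed auto
  also have "\<dots> = real (card (PiE I (\<lambda>_. {-Mi..Mi}))) * exp (c^2 * a^2 * (\<Sum>j\<in>I. (v j)^2) / 2)"
    using assms by (simp add: prod.distrib card_PiE exp_sum[symmetric] sum_divide_distrib sum_distrib_left)
  finally show ?thesis .
qed

lemma bucket_bound:
  fixes y l :: real
  assumes "l \<ge> 6"
  shows "real_of_int \<bar>\<lfloor>3*y + 1/2\<rfloor>\<bar> \<le> exp (- l/6) * (exp (l*y) + exp (-(l*y)))"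
proof (cases "\<lfloor>3*y + 1/2\<rfloor> = 0")
  case True then show ?thesis by (simp add: add_nonneg_nonneg)
next
  case False
  have a: "real_of_int \<bar>\<lfloor>3*y + 1/2\<rfloor>\<bar> \<le> 6 * \<bar>y\<bar>" and b: "6*\<bar>y\<bar> \<ge> 1"
    using False by (auto simp: abs_if split: if_splits; linarith)+
  have "6*\<bar>y\<bar> \<le> exp (6*\<bar>y\<bar> - 1)" using exp_ge_add_one_self[of "6*\<bar>y\<bar> - 1"] by simp
  also have "\<dots> \<le> exp (l * (\<bar>y\<bar> - 1/6))"
  proof -
    have "0 \<le> (l/6 - 1) * (6*\<bar>y\<bar> - 1)" using assms b by simp
    thus ?thesis by (simp add: algebra_simps)
  qed
  also have "\<dots> = exp (-l/6) * exp (l * \<bar>y\<bar>)" by (simp add: algebra_simps flip: exp_add)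
  also have "\<dots> \<le> exp (-l/6) * (exp (l*y) + exp (-(l*y)))"
    by (intro mult_left_mono) (auto simp: abs_if add_nonneg_nonneg)
  finally show ?thesis using a by linarith
qed

lemma geom_sym:
  fixes th :: real and B :: nat
  assumes "exp (-th) \<le> 1/2"
  shows "(\<Sum>z\<in>{-int B..int B}. exp (-th * of_int \<bar>z\<bar>)) \<le> 1 + 4 * exp (-th)"
proof -
  define q where "q = exp (-th)"
  have q: "0 < q" "q \<le> 1/2" using assms by (auto simp: q_def)
  have pw: "exp (-th * of_int \<bar>z\<bar>) = q ^ nat \<bar>z\<bar>" for z :: int
    by (simp add: q_def flip: exp_of_nat_mult)
  have ind: "(\<Sum>z\<in>{-int N..int N}. q ^ nat \<bar>z\<bar>) \<le> (1 + q - 2 * q^(N+1)) / (1 - q)" for N :: nat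
  proof (induction N)
    case 0 then show ?case using q by (simp add: field_simps)
  next
    case (Suc N)
    have set: "{-int (Suc N)..int (Suc N)} = insert (int (Suc N)) (insert (- int (Suc N)) {-int N..int N})"
      by auto
    have "(\<Sum>z\<in>{-int (Suc N)..int (Suc N)}. q ^ nat \<bar>z\<bar>) = (\<Sum>z\<in>{-int N..int N}. q ^ nat \<bar>z\<bar>) + 2 * q^(Suc N)"
      unfolding set by (subst sum.insert; simp)+ (simp add: nat_add_distrib)
    also have "\<dots> \<le> (1 + q - 2 * q^(N+1)) / (1 - q) + 2 * q^(Suc N)" using Suc by simp
    also have "\<dots> = (1 + q - 2 * q^(Suc N+1)) / (1 - q)" using q by (simp add: field_simps)
    finally show ?case .
  qed
  have "(1 + q - 2 * q^(B+1)) / (1 - q) \<le> (1 + q) / (1 - q)"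
    using q by (intro divide_right_mono) auto
  also have "\<dots> \<le> 1 + 4 * q"
    using q by (simp add: field_simps)
  finally have "(\<Sum>z\<in>{-int B..int B}. q ^ nat \<bar>z\<bar>) \<le> 1 + 4 * q" using ind[of B] by linarith
  thus ?thesis by (simp only: pw q_def)
qed


lemma K_meas:
  fixes k n :: nat and u :: "nat \<Rightarrow> nat \<Rightarrow> real"
  shows "{x \<in> PiE {..<k} (\<lambda>_. UNIV). \<forall>i<n. \<bar>inner_k k x (u i)\<bar> \<le> 1} \<in> sets (lebesgue_k k)"
proof -
  have [measurable]: "(\<lambda>x. \<Sum>j<k. x j * u i j) \<in> borel_measurable (PiM {..<k} (\<lambda>_. lborel))" for i
    by measurable
  have p: "Measurable.pred (PiM {..<k} (\<lambda>_. lborel)) (\<lambda>x. \<bar>\<Sum>j<k. x j * u i j\<bar> \<le> (1::real))" for i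
    by measurable
  have [measurable]: "Measurable.pred (PiM {..<k} (\<lambda>_. lborel)) (\<lambda>x. \<forall>i\<in>{..<n}. \<bar>\<Sum>j<k. x j * u i j\<bar> \<le> (1::real))"
    by (rule pred_intros_finite(3)[where P="\<lambda>x i. \<bar>\<Sum>j<k. x j * u i j\<bar> \<le> (1::real)"]) (auto intro: p)
  have "{x \<in> space (PiM {..<k} (\<lambda>_. lborel)). \<forall>i\<in>{..<n}. \<bar>\<Sum>j<k. x j * u i j\<bar> \<le> (1::real)} \<in> sets (PiM {..<k} (\<lambda>_. lborel))"
    by measurable
  thus ?thesis by (simp add: lebesgue_k_def inner_k_def space_PiM)
qed


lemma volume_from_fiber:
  fixes k n :: nat and u :: "nat \<Rightarrow> nat \<Rightarrow> real" and h :: real and F :: "(nat \<Rightarrow> int) set"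
  assumes h: "h > 0" and fin: "finite F" and ext: "F \<subseteq> PiE {..<k} (\<lambda>_. UNIV)"
    and close: "\<And>m i. m \<in> F \<Longrightarrow> i < n \<Longrightarrow>
        \<bar>(\<Sum>j<k. h * of_int (m j) * u i j) - (\<Sum>j<k. h * of_int (m0 j) * u i j)\<bar> < 1/3"
    and hk: "h * k \<le> 1/3" and ub: "\<And>i j. i < n \<Longrightarrow> j < k \<Longrightarrow> \<bar>u i j\<bar> \<le> 1"
  shows "ennreal (real (card F) * h^k) \<le>
     emeasure (lebesgue_k k) {x \<in> PiE {..<k} (\<lambda>_. UNIV). \<forall>i<n. \<bar>inner_k k x (u i)\<bar> \<le> 1}"
proof -
  define C where "C m = PiE {..<k} (\<lambda>j. {h * of_int (m j - m0 j) ..< h * of_int (m j - m0 j) + h})" for m :: "nat \<Rightarrow> int"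
  define K where "K = {x \<in> PiE {..<k} (\<lambda>_. UNIV). \<forall>i<n. \<bar>inner_k k x (u i)\<bar> \<le> 1}"
  have CK: "C m \<subseteq> K" if m: "m \<in> F" for m
  proof
    fix x assume x: "x \<in> C m"
    show "x \<in> K" unfolding K_def
    proof (intro CollectI conjI allI impI)
      show "x \<in> PiE {..<k} (\<lambda>_. UNIV)" using x unfolding C_def by (simp add: PiE_iff)
      fix i assume i: "i < n"
      define z where "z j = x j - h * of_int (m j - m0 j)" for j
      have xj: "x j \<in> {h * of_int (m j - m0 j) ..< h * of_int (m j - m0 j) + h}" if "j < k" for j
        using x that unfolding C_def PiE_iff by blast
      have z: "0 \<le> z j" "z j < h" if "j < k" for j using xj[OF that] unfolding z_def by auto
      have "inner_k k x (u i) = ((\<Sum>j<k. h * of_int (m j) * u i j) - (\<Sum>j<k. h * of_int (m0 j) * u i j)) + (\<Sum>j<k. z j * u i j)"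
        by (simp add: inner_k_def z_def sum_subtractf[symmetric] sum.distrib[symmetric] algebra_simps)
      moreover have "\<bar>\<Sum>j<k. z j * u i j\<bar> \<le> 1/3"
      proof -
        have "\<bar>\<Sum>j<k. z j * u i j\<bar> \<le> (\<Sum>j<k. \<bar>z j * u i j\<bar>)" by (rule sum_abs)
        also have "\<dots> \<le> (\<Sum>j<k. h)"
        proof (rule sum_mono)
          fix j assume "j \<in> {..<k}"
          hence "\<bar>z j\<bar> \<le> h" "\<bar>u i j\<bar> \<le> 1" using z[of j] ub[of i j] i by auto
          hence "\<bar>z j\<bar> * \<bar>u i j\<bar> \<le> h * 1" by (intro mult_mono) auto
          thus "\<bar>z j * u i j\<bar> \<le> h" by (simp add: abs_mult)
        qed
        also have "\<dots> = h * k" by simp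
        finally show ?thesis using hk by linarith
      qed
      ultimately show "\<bar>inner_k k x (u i)\<bar> \<le> 1" using close[OF m i] by linarith
    qed
  qed
  have disj: "disjoint_family_on C F"
    unfolding disjoint_family_on_def
  proof (intro ballI impI)
    fix m m' assume mm: "m \<in> F" "m' \<in> F" "m \<noteq> m'"
    have "\<exists>j<k. m j \<noteq> m' j"
    proof (rule ccontr)
      assume "\<not> (\<exists>j<k. m j \<noteq> m' j)"
      hence "\<And>j. j \<in> {..<k} \<Longrightarrow> m j = m' j" by simp
      moreover have "m \<in> PiE {..<k} (\<lambda>_. UNIV)" "m' \<in> PiE {..<k} (\<lambda>_. UNIV)" using ext mm by blast+
      ultimately have "m = m'" by (intro PiE_ext[of m "{..<k}" "\<lambda>_. UNIV" m']) 
      thus False using mm by blast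
    qed
    then obtain j where j: "j < k" "m j \<noteq> m' j" by blast
    show "C m \<inter> C m' = {}"
    proof (rule ccontr)
      assume "C m \<inter> C m' \<noteq> {}"
      then obtain x where x: "x \<in> C m" "x \<in> C m'" by blast
      have "x j \<in> {h * of_int (m j - m0 j) ..< h * of_int (m j - m0 j) + h}"
        using x(1) j unfolding C_def PiE_iff by blast
      moreover have "x j \<in> {h * of_int (m' j - m0 j) ..< h * of_int (m' j - m0 j) + h}"
        using x(2) j unfolding C_def PiE_iff by blast
      ultimately have i1: "h * of_int (m j - m0 j) \<le> x j" "x j < h * (of_int (m j - m0 j) + 1)"
            "h * of_int (m' j - m0 j) \<le> x j" "x j < h * (of_int (m' j - m0 j) + 1)"
        by (simp_all add: distrib_left)
      have "of_int (m j - m0 j) \<le> x j / h" "x j / h < of_int (m j - m0 j) + 1"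
            "of_int (m' j - m0 j) \<le> x j / h" "x j / h < of_int (m' j - m0 j) + 1"
        using i1 h by (simp_all add: pos_le_divide_eq pos_divide_less_eq mult.commute)
      hence "\<lfloor>x j / h\<rfloor> = m j - m0 j" "\<lfloor>x j / h\<rfloor> = m' j - m0 j"
        by (simp_all add: floor_eq_iff)
      thus False using j by simp
    qed
  qed
  have Cm: "C m \<in> sets (lebesgue_k k)" for m
    unfolding C_def lebesgue_k_def by (rule sets_PiM_I_finite) auto
  have Cmeas: "emeasure (lebesgue_k k) (C m) = ennreal (h ^ k)" for m
    unfolding C_def lebesgue_k_def using h by (subst cube_measure) auto
  have "ennreal (real (card F) * h^k) = (\<Sum>m\<in>F. emeasure (lebesgue_k k) (C m))"
    using h by (simp add: Cmeas ennreal_mult') (metis ennreal_of_nat_eq_real_of_nat)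
  also have "\<dots> = emeasure (lebesgue_k k) (\<Union>m\<in>F. C m)"
    using disj fin Cm by (intro sum_emeasure) auto
  also have "\<dots> \<le> emeasure (lebesgue_k k) K"
  proof (rule emeasure_mono)
    show "(\<Union>m\<in>F. C m) \<subseteq> K" using CK by blast
    show "K \<in> sets (lebesgue_k k)" unfolding K_def by (rule K_meas)
  qed
  finally show ?thesis unfolding K_def .
qed




lemma main_bound:
  fixes k n :: nat and u :: "nat \<Rightarrow> nat \<Rightarrow> real"
  assumes k1: "1 \<le> k" and kn: "k \<le> n" and nu: "\<forall>i<n. norm_k k (u i) \<le> 1"
  shows "ennreal (((1 / (2 * exp 3 * sqrt 216)) / sqrt (1 + ln (real n / real k))) ^ k) \<le>
     emeasure (lebesgue_k k) {x \<in> PiE {..<k} (\<lambda>_. UNIV). \<forall>i<n. \<bar>inner_k k x (u i)\<bar> \<le> 1}"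
proof -
  define r where "r = real n / real k"
  have kpos: "real k > 0" using k1 by simp
  have r1: "r \<ge> 1" using kn kpos by (simp add: r_def)
  have nrk: "real n = r * real k" using kpos by (simp add: r_def)
  define L where "L = 1 + ln r"
  have L1: "L \<ge> 1" using r1 by (simp add: L_def)
  define a where "a = 1 / sqrt (216 * L)"
  have apos: "a > 0" using L1 by (simp add: a_def)
  have a2: "a^2 = 1 / (216 * L)" using L1 by (simp add: a_def power_divide)
  have ale: "a \<le> 1" 
  proof -
    have "1 \<le> sqrt (216 * L)" using L1 by simp
    thus ?thesis by (simp add: a_def)
  qed
  define h where "h = min a (1 / (3 * real k))"
  have hpos: "h > 0" using apos kpos by (simp add: h_def)
  have hle: "h \<le> a" by (simp add: h_def)
  have hk: "h * real k \<le> 1/3" using kpos by (simp add: h_def min_def field_simps)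
  define Mn where "Mn = nat \<lfloor>a / h\<rfloor>"
  define Mi where "Mi = int Mn"
  have ah1: "a / h \<ge> 1" using hle hpos by simp
  have Mi_eq: "Mi = \<lfloor>a / h\<rfloor>" using ah1 by (simp add: Mi_def Mn_def)
  have Mi0: "0 \<le> Mi" by (simp add: Mi_def)
  have hM: "h * of_int Mi \<le> a"
  proof -
    have "of_int Mi \<le> a / h" using Mi_eq by simp
    thus ?thesis using hpos by (simp add: field_simps)
  qed
  have hM2: "(2 * real Mn + 1) * h \<ge> a"
  proof -
    have "a / h < of_int Mi + 1" using Mi_eq by linarith
    hence "a < (of_int Mi + 1) * h" using hpos by (simp add: field_simps)
    thus ?thesis using hle by (simp add: Mi_def algebra_simps)
  qed
  define P where "P = PiE {..<k} (\<lambda>_. {-Mi..Mi})"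
  have finP: "finite P" by (simp add: P_def finite_PiE)
  have cardP: "card P = (2 * Mn + 1) ^ k"
  proof -
    have "card {-Mi..Mi} = 2 * Mn + 1" by (simp add: Mi_def nat_add_distrib)
    thus ?thesis by (simp add: P_def card_PiE)
  qed
  have cardP_pos: "card P > 0" using cardP by simp
  define Y where "Y i m = (\<Sum>j<k. h * of_int (m j) * u i j)" for i m
  define bk where "bk y = \<lfloor>3 * y + 1/2\<rfloor>" for y :: real
  have u2: "(\<Sum>j<k. (u i j)^2) \<le> 1" if "i < n" for i
    using nu that by (simp add: norm_k_def)
  have ub: "\<bar>u i j\<bar> \<le> 1" if "i < n" "j < k" for i j
  proof -
    have "(u i j)^2 \<le> (\<Sum>j<k. (u i j)^2)" using that by (intro member_le_sum) auto
    hence "(u i j)^2 \<le> 1" using u2[OF that(1)] by linarith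
    thus ?thesis by (simp add: abs_square_le_1)
  qed
  define lam where "lam = 36 * L"
  have lam6: "lam \<ge> 6" using L1 by (simp add: lam_def)
  have lam_a: "lam^2 * a^2 / 2 = 3 * L"
  proof -
    have "lam^2 * a^2 / 2 = (36*L)^2 * (1/(216*L)) / 2" by (simp add: lam_def a2)
    also have "\<dots> = 3 * L" using L1 by (simp add: power2_eq_square field_simps)
    finally show ?thesis .
  qed
  have per_i: "(\<Sum>m\<in>P. real_of_int \<bar>bk (Y i m)\<bar>) \<le> 2 * real (card P) * exp (-3 * L)" if i: "i < n" for i
  proof -
    have mom: "(\<Sum>m\<in>P. exp (c * Y i m)) \<le> real (card P) * exp (3 * L)" if "c^2 = lam^2" for c
    proof -
      have "(\<Sum>m\<in>P. exp (c * Y i m)) \<le> real (card P) * exp (c^2 * a^2 * (\<Sum>j<k. (u i j)^2) / 2)"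
        unfolding P_def Y_def by (rule moment) (use hpos hM Mi0 in auto)
      also have "\<dots> \<le> real (card P) * exp (c^2 * a^2 * 1 / 2)"
      proof -
        have "c^2 * a^2 * (\<Sum>j<k. (u i j)^2) \<le> c^2 * a^2 * 1"
          using u2[OF i] by (intro mult_left_mono) auto
        thus ?thesis by (intro mult_left_mono) auto
      qed
      also have "\<dots> = real (card P) * exp (3 * L)" using lam_a that by simp
      finally show ?thesis .
    qed
    have "(\<Sum>m\<in>P. real_of_int \<bar>bk (Y i m)\<bar>) \<le> (\<Sum>m\<in>P. exp (- lam/6) * (exp (lam * Y i m) + exp ((-lam) * Y i m)))"
      unfolding bk_def using bucket_bound[OF lam6] by (intro sum_mono) simp
    also have "\<dots> = exp (- lam/6) * ((\<Sum>m\<in>P. exp (lam * Y i m)) + (\<Sum>m\<in>P. exp ((-lam) * Y i m)))"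
      by (simp only: sum_distrib_left sum.distrib distrib_left)
    also have "\<dots> \<le> exp (- lam/6) * (real (card P) * exp (3 * L) + real (card P) * exp (3 * L))"
      by (intro mult_left_mono add_mono mom) auto
    also have "\<dots> = 2 * real (card P) * (exp (- lam/6) * exp (3 * L))" by simp
    also have "exp (- lam/6) * exp (3 * L) = exp (-3 * L)" by (simp add: lam_def flip: exp_add)
    finally show ?thesis .
  qed
  define T where "T = 4 * real n * exp (-3 * L)"
  have Tpos: "T > 0" using kn k1 by (simp add: T_def)
  define S where "S m = (\<Sum>i<n. real_of_int \<bar>bk (Y i m)\<bar>)" for m
  have S0: "S m \<ge> 0" for m by (simp add: S_def sum_nonneg)
  have sumS: "(\<Sum>m\<in>P. S m) \<le> real (card P) * T / 2"
  proof -
    have "(\<Sum>m\<in>P. S m) = (\<Sum>i<n. \<Sum>m\<in>P. real_of_int \<bar>bk (Y i m)\<bar>)"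
      unfolding S_def by (rule sum.swap)
    also have "\<dots> \<le> (\<Sum>i<n. 2 * real (card P) * exp (-3 * L))"
      by (intro sum_mono per_i) auto
    also have "\<dots> = real (card P) * T / 2" by (simp add: T_def)
    finally show ?thesis .
  qed
  define G where "G = {m \<in> P. S m \<le> T}"
  define Bad where "Bad = {m \<in> P. T < S m}"
  have finG: "finite G" "finite Bad" using finP by (auto simp: G_def Bad_def)
  have "real (card Bad) * T \<le> (\<Sum>m\<in>Bad. S m)"
  proof -
    have "(\<Sum>m\<in>Bad. T) \<le> (\<Sum>m\<in>Bad. S m)" by (intro sum_mono) (auto simp: Bad_def)
    thus ?thesis by simp
  qed
  also have "\<dots> \<le> (\<Sum>m\<in>P. S m)" using finP S0 by (intro sum_mono2) (auto simp: Bad_def)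
  finally have "real (card Bad) * T \<le> real (card P) * T / 2" using sumS by linarith
  hence cBad: "real (card Bad) \<le> real (card P) / 2" using Tpos by (simp add: field_simps)
  have "card G + card Bad = card P"
  proof -
    have "G \<union> Bad = P" "G \<inter> Bad = {}" by (auto simp: G_def Bad_def)
    thus ?thesis using finG card_Un_disjoint by metis
  qed
  hence cG: "real (card G) \<ge> real (card P) / 2" using cBad by linarith
  define Bn where "Bn = 3 * k + 2"
  define bvec where "bvec m = restrict (\<lambda>i. bk (Y i m)) {..<n}" for m
  define Box where "Box = PiE {..<n} (\<lambda>_. {- int Bn..int Bn})"
  define Bset where "Bset = {\<beta> \<in> Box. (\<Sum>i<n. real_of_int \<bar>\<beta> i\<bar>) \<le> T}"
  have finBox: "finite Box" by (simp add: Box_def finite_PiE)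
  have finB: "finite Bset" using finBox by (simp add: Bset_def)
  have Ybd: "\<bar>Y i m\<bar> \<le> real k" if "i < n" "m \<in> P" for i m
  proof -
    have "\<bar>Y i m\<bar> \<le> (\<Sum>j<k. \<bar>h * of_int (m j) * u i j\<bar>)" unfolding Y_def by (rule sum_abs)
    also have "\<dots> \<le> (\<Sum>j<k. 1)"
    proof (rule sum_mono)
      fix j assume j: "j \<in> {..<k}"
      have "m j \<in> {-Mi..Mi}" using that(2) j unfolding P_def PiE_iff by blast
      hence "\<bar>m j\<bar> \<le> Mi" by (simp add: abs_le_iff)
      hence "h * \<bar>of_int (m j)\<bar> \<le> h * of_int Mi" using hpos by (intro mult_left_mono) auto
      also have "\<dots> \<le> 1" using hM ale by linarith
      finally have "\<bar>h * of_int (m j)\<bar> \<le> 1" using hpos by (simp add: abs_mult)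
      moreover have "\<bar>u i j\<bar> \<le> 1" using ub that j by auto
      ultimately have "\<bar>h * of_int (m j)\<bar> * \<bar>u i j\<bar> \<le> 1 * 1" by (intro mult_mono) auto
      thus "\<bar>h * of_int (m j) * u i j\<bar> \<le> 1" by (simp add: abs_mult)
    qed
    also have "\<dots> = real k" by simp
    finally show ?thesis .
  qed
  have bvecB: "bvec m \<in> Bset" if "m \<in> G" for m
  proof -
    have mP: "m \<in> P" using that by (simp add: G_def)
    have "bk (Y i m) \<in> {- int Bn..int Bn}" if "i < n" for i
    proof -
      have "\<bar>Y i m\<bar> \<le> real k" using Ybd that mP by auto
      hence "- (3 * real k + 2) \<le> 3 * Y i m + 1/2 - 1" "3 * Y i m + 1/2 \<le> 3 * real k + 2" by linarith+
      hence "- (3 * real k + 2) \<le> real_of_int (bk (Y i m))" "real_of_int (bk (Y i m)) \<le> 3 * real k + 2"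
        unfolding bk_def by linarith+
      hence "- int (3 * k + 2) \<le> bk (Y i m)" "bk (Y i m) \<le> int (3 * k + 2)" by linarith+
      thus ?thesis by (simp add: Bn_def)
    qed
    hence "bvec m \<in> Box" by (simp add: bvec_def Box_def)
    moreover have "(\<Sum>i<n. real_of_int \<bar>bvec m i\<bar>) = S m" by (simp add: bvec_def S_def)
    ultimately show ?thesis using that by (simp add: Bset_def G_def)
  qed
  define th where "th = ln (2 * r)"
  have eth: "exp (- th) = 1 / (2 * r)" using r1 by (simp add: th_def exp_minus inverse_eq_divide)
  have thpos: "th > 0" using r1 by (simp add: th_def)
  have cardB: "real (card Bset) \<le> exp (th * T) * (1 + 4 * exp (-th)) ^ n"
  proof -
    have "real (card Bset) = (\<Sum>\<beta>\<in>Bset. 1)" by simp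
    also have "\<dots> \<le> (\<Sum>\<beta>\<in>Bset. exp (th * T) * (\<Prod>i<n. exp (-th * of_int \<bar>\<beta> i\<bar>)))"
    proof (rule sum_mono)
      fix \<beta> assume b: "\<beta> \<in> Bset"
      have "0 \<le> th * (T - (\<Sum>i<n. real_of_int \<bar>\<beta> i\<bar>))" using b thpos by (simp add: Bset_def)
      hence "1 \<le> exp (th * (T - (\<Sum>i<n. real_of_int \<bar>\<beta> i\<bar>)))" by simp
      also have "\<dots> = exp (th * T) * (\<Prod>i<n. exp (-th * of_int \<bar>\<beta> i\<bar>))"
      proof -
        have "th * (T - (\<Sum>i<n. real_of_int \<bar>\<beta> i\<bar>)) = th * T + (\<Sum>i<n. -th * of_int \<bar>\<beta> i\<bar>)"
          by (simp add: sum_distrib_left right_diff_distrib sum_negf)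
        thus ?thesis by (simp add: exp_add exp_sum)
      qed
      finally show "1 \<le> exp (th * T) * (\<Prod>i<n. exp (-th * of_int \<bar>\<beta> i\<bar>))" .
    qed
    also have "\<dots> \<le> (\<Sum>\<beta>\<in>Box. exp (th * T) * (\<Prod>i<n. exp (-th * of_int \<bar>\<beta> i\<bar>)))"
      using finBox by (intro sum_mono2) (auto simp: Bset_def intro!: prod_nonneg mult_nonneg_nonneg)
    also have "\<dots> = exp (th * T) * (\<Prod>i<n. \<Sum>z\<in>{- int Bn..int Bn}. exp (-th * of_int \<bar>z\<bar>))"
      unfolding Box_def sum_distrib_left[symmetric]
      by (subst prod_sum_PiE[where f="\<lambda>i z. exp (-th * of_int \<bar>z\<bar>)"]) auto
    also have "\<dots> \<le> exp (th * T) * (\<Prod>i<n. 1 + 4 * exp (-th))"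
      using eth r1 by (intro mult_left_mono prod_mono conjI geom_sym sum_nonneg) auto
    also have "\<dots> = exp (th * T) * (1 + 4 * exp (-th)) ^ n" by simp
    finally show ?thesis .
  qed
  have e3: "exp (3::real) \<ge> 8"
  proof -
    have "(2::real) \<le> exp 1" using exp_ge_add_one_self[of 1] by simp
    hence "(2::real)^3 \<le> exp 1 ^ 3" by (intro power_mono) auto
    thus ?thesis by (simp flip: exp_of_nat_mult)
  qed
  have eL: "exp (-3 * L) = exp (-3) / r^3"
  proof -
    have "exp (-3 * L) = exp (-3) * exp (- (3 * ln r))" by (simp add: L_def algebra_simps flip: exp_add)
    also have "exp (3 * ln r) = r^3" using r1 by (simp add: exp_of_nat_mult[of 3, simplified] exp_ln)
    hence "exp (- (3 * ln r)) = 1 / r^3" by (simp add: exp_minus inverse_eq_divide)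
    finally show ?thesis by simp
  qed
  have thT: "th * T \<le> real k"
  proof -
    have "th \<le> 2 * r" using r1 ln_le_minus_one[of "2*r"] by (simp add: th_def)
    have "T = 4 * r * real k * exp (-3) / r^3" using nrk eL by (simp add: T_def)
    also have "\<dots> = 4 * real k * exp (-3) / r^2" using r1 by (simp add: power2_eq_square power3_eq_cube field_simps)
    finally have Teq: "T = 4 * real k * exp (-3) / r^2" .
    have "th * T \<le> 2 * r * T" using \<open>th \<le> 2 * r\<close> Tpos by (intro mult_right_mono) auto
    also have "\<dots> = 2 * r * (4 * real k * exp (-3) / r^2)" using Teq by simp
    also have "\<dots> = 8 * real k / (r * exp 3)" using r1 by (simp add: power2_eq_square exp_minus field_simps)
    also have "\<dots> \<le> real k"
    proof -
      have "1 * 8 \<le> r * exp 3" using r1 e3 by (intro mult_mono) auto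
      hence "8 * real k / (r * exp 3) \<le> 8 * real k / 8"
        using kpos by (intro divide_left_mono) auto
      thus ?thesis by simp
    qed
    finally show ?thesis .
  qed
  have pw: "(1 + 4 * exp (-th)) ^ n \<le> exp (2 * real k)"
  proof -
    have "(1 + 4 * exp (-th)) ^ n \<le> exp (4 * exp (-th)) ^ n"
      by (intro power_mono) (auto simp: add_nonneg_nonneg exp_ge_add_one_self add.commute)
    also have "\<dots> = exp (real n * (4 * exp (-th)))" by (simp add: exp_of_nat_mult)
    also have "real n * (4 * exp (-th)) = 2 * real k" using eth nrk r1 by (simp add: field_simps)
    finally show ?thesis .
  qed
  have cB: "real (card Bset) \<le> exp (3 * real k)"
  proof -
    have "real (card Bset) \<le> exp (th * T) * exp (2 * real k)"
      using cardB pw by (meson exp_gt_zero less_imp_le mult_left_mono order_trans)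
    also have "\<dots> \<le> exp (real k) * exp (2 * real k)" using thT by simp
    also have "\<dots> = exp (3 * real k)" by (simp flip: exp_add)
    finally show ?thesis .
  qed
  define Fb where "Fb \<beta> = {m \<in> G. bvec m = \<beta>}" for \<beta>
  have Gne: "G \<noteq> {}" using cG cardP_pos by auto
  then obtain m1 where "m1 \<in> G" by blast
  hence Bne: "Bset \<noteq> {}" using bvecB by blast
  have GU: "G = (\<Union>\<beta>\<in>Bset. Fb \<beta>)" using bvecB by (auto simp: Fb_def)
  have "\<exists>\<beta>\<in>Bset. real (card G) \<le> real (card Bset) * real (card (Fb \<beta>))"
  proof (rule ccontr)
    assume "\<not> ?thesis"
    hence lt: "real (card Bset) * real (card (Fb \<beta>)) < real (card G)" if "\<beta> \<in> Bset" for \<beta>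
      using that by force
    have "real (card Bset) * real (card G) \<le> real (card Bset) * (\<Sum>\<beta>\<in>Bset. real (card (Fb \<beta>)))"
    proof -
      have "card G \<le> (\<Sum>\<beta>\<in>Bset. card (Fb \<beta>))" unfolding GU using finB by (rule card_UN_le)
      hence "real (card G) \<le> (\<Sum>\<beta>\<in>Bset. real (card (Fb \<beta>)))" by (simp flip: of_nat_sum)
      thus ?thesis by (intro mult_left_mono) auto
    qed
    also have "\<dots> = (\<Sum>\<beta>\<in>Bset. real (card Bset) * real (card (Fb \<beta>)))" by (simp add: sum_distrib_left)
    also have "\<dots> < (\<Sum>\<beta>\<in>Bset. real (card G))" using finB Bne lt by (intro sum_strict_mono) auto
    also have "\<dots> = real (card Bset) * real (card G)" by simp
    finally show False by simp
  qed
  then obtain \<beta> where b: "\<beta> \<in> Bset" and cF: "real (card G) \<le> real (card Bset) * real (card (Fb \<beta>))" by blast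
  have cBpos: "real (card Bset) > 0" using finB Bne by (simp add: card_gt_0_iff)
  have Fne: "Fb \<beta> \<noteq> {}" using cF cG cardP_pos cBpos by (auto simp: card_gt_0_iff)
  then obtain m0 where m0: "m0 \<in> Fb \<beta>" by blast
  have finF: "finite (Fb \<beta>)" using finG by (simp add: Fb_def)
  have FP: "Fb \<beta> \<subseteq> P" by (auto simp: Fb_def G_def)
  have Fext: "Fb \<beta> \<subseteq> PiE {..<k} (\<lambda>_. UNIV)"
    using FP unfolding P_def by (auto simp: PiE_iff)
  have close: "\<bar>Y i m - Y i m0\<bar> < 1/3" if "m \<in> Fb \<beta>" "i < n" for m i
  proof -
    have "bvec m i = bvec m0 i" using that m0 by (simp add: Fb_def)
    hence "bk (Y i m) = bk (Y i m0)" using that by (simp add: bvec_def)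
    hence "\<lfloor>3 * Y i m + 1/2\<rfloor> = \<lfloor>3 * Y i m0 + 1/2\<rfloor>" by (simp add: bk_def)
    hence "\<bar>(3 * Y i m + 1/2) - (3 * Y i m0 + 1/2)\<bar> < 1" by linarith
    thus ?thesis by linarith
  qed
  have vol: "ennreal (real (card (Fb \<beta>)) * h^k) \<le>
     emeasure (lebesgue_k k) {x \<in> PiE {..<k} (\<lambda>_. UNIV). \<forall>i<n. \<bar>inner_k k x (u i)\<bar> \<le> 1}"
    by (rule volume_from_fiber[OF hpos finF Fext _ hk ub]) (use close in \<open>auto simp: Y_def\<close>)
  have cardF: "real (card (Fb \<beta>)) \<ge> real (card P) / (2 * exp (3 * real k))"
  proof -
    have "real (card P) / 2 \<le> real (card Bset) * real (card (Fb \<beta>))" using cF cG by linarith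
    also have "\<dots> \<le> exp (3 * real k) * real (card (Fb \<beta>))" using cB by (intro mult_right_mono) auto
    finally show ?thesis by (simp add: field_simps)
  qed
  define \<delta> where "\<delta> = 1 / (2 * exp 3 * sqrt 216)"
  have dl: "\<delta> / sqrt (1 + ln (real n / real k)) = a / (2 * exp 3)"
  proof -
    have e1: "1 + ln (real n / real k) = L" by (simp add: L_def r_def)
    have e2: "a = 1 / (sqrt 216 * sqrt L)" by (simp add: a_def real_sqrt_mult)
    have "sqrt L > 0" using L1 by simp
    thus ?thesis unfolding e1 e2 \<delta>_def by (simp add: field_simps)
  qed
  have "(\<delta> / sqrt (1 + ln (real n / real k))) ^ k = a ^ k / (2 ^ k * exp 3 ^ k)"
    by (simp add: dl power_divide power_mult_distrib)
  also have "\<dots> \<le> a ^ k / (2 * exp (3 * real k))"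
  proof -
    have "(2::real) \<le> 2 ^ k" using k1 by (metis power_one_right power_increasing one_le_numeral)
    hence "2 * exp (3 * real k) \<le> 2 ^ k * exp 3 ^ k"
      by (simp add: exp_of_nat_mult[symmetric] mult.commute)
    thus ?thesis using apos by (intro divide_left_mono) auto
  qed
  also have "\<dots> \<le> ((2 * real Mn + 1) * h) ^ k / (2 * exp (3 * real k))"
    using apos hM2 by (intro divide_right_mono power_mono) auto
  also have "\<dots> = real (card P) * h^k / (2 * exp (3 * real k))"
    by (simp add: cardP power_mult_distrib add.commute)
  also have "\<dots> \<le> real (card (Fb \<beta>)) * h^k"
  proof -
    have "real (card P) * h^k / (2 * exp (3 * real k)) = (real (card P) / (2 * exp (3 * real k))) * h^k" by simp
    also have "\<dots> \<le> real (card (Fb \<beta>)) * h^k" using cardF hpos by (intro mult_right_mono) auto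
    finally show ?thesis .
  qed
  finally have "(\<delta> / sqrt (1 + ln (real n / real k))) ^ k \<le> real (card (Fb \<beta>)) * h^k" .
  hence "ennreal ((\<delta> / sqrt (1 + ln (real n / real k))) ^ k) \<le> ennreal (real (card (Fb \<beta>)) * h^k)"
    by (rule ennreal_leI)
  thus ?thesis using vol unfolding \<delta>_def by (rule order_trans)
qed

theorem theorem1:
  shows "\<exists>\<delta>::real. \<delta> > 0 \<and>
    (\<forall>k n :: nat. \<forall>u :: nat \<Rightarrow> nat \<Rightarrow> real.
       1 \<le> k \<longrightarrow> k \<le> n \<longrightarrow> (\<forall>i<n. norm_k k (u i) \<le> 1) \<longrightarrow>
       emeasure (lebesgue_k k)
         {x \<in> PiE {..<k} (\<lambda>_. UNIV). \<forall>i<n. \<bar>inner_k k x (u i)\<bar> \<le> 1}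
       \<ge> ennreal ((\<delta> / sqrt (1 + ln (real n / real k))) ^ k))"
proof (intro exI conjI allI impI)
  show "(0::real) < 1 / (2 * exp 3 * sqrt 216)" by simp
next
  fix k n :: nat and u :: "nat \<Rightarrow> nat \<Rightarrow> real"
  assume "1 \<le> k" "k \<le> n" "\<forall>i<n. norm_k k (u i) \<le> 1"
  thus "ennreal (((1 / (2 * exp 3 * sqrt 216)) / sqrt (1 + ln (real n / real k))) ^ k) \<le>
     emeasure (lebesgue_k k) {x \<in> PiE {..<k} (\<lambda>_. UNIV). \<forall>i<n. \<bar>inner_k k x (u i)\<bar> \<le> 1}"
    by (rule main_bound)
qed

end
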